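(* For $n\ge2$ let $c=c(n)>0$ be the unique value with $\Pr_{\mathbf{g}\sim N(0,1)}[|\mathbf{g}|\le c]=(1/2)^{1/n}$, and let $K=[-c,c]^n\subseteq\mathbb{R}^n$ (so $\mathrm{vol}(K)=1/2$), viewed as $K:\mathbb{R}^n\to\{-1,1\}$. Then $\mathsf{W}^{\le2}[K]=O\big(\tfrac{\log^2 n}{n}\big)$.
   Context: $\mathrm{vol}(K)=\Pr_{\mathbf{g}\sim N(0,I_n)}[\mathbf{g}\in K]$. $K(x)=1$ if $x\in K$ and $-1$ otherwise. For $S\in\mathbb{N}^n$, $H_S(x)=\prod_i h_{S_i}(x_i)$ with $h_j$ the normalized univariate Hermite polynomials; $\tilde f(S)=\mathbf{E}_{\mathbf{g}\sim N(0,I_n)}[f(\mathbf{g})H_S(\mathbf{g})]$, $|S|=\sum_iS_i$, and $\mathsf{W}^{\le2}[f]=\sum_{|S|\le2}\tilde f(S)^2$. The $O(\cdot)$ hides an absolute constant. *)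

theory Defs
  imports "HOL-Probability.Probability"
begin

definition gauss1 :: "real measure" where
  "gauss1 = density lborel std_normal_density"

text \<open>Standard Gaussian measure N(0,I_n) on R^n, with R^n represented as
  (extensional) functions on the index set {..<n}.\<close>
definition gaussn :: "nat \<Rightarrow> (nat \<Rightarrow> real) measure" where
  "gaussn n = PiM {..<n} (\<lambda>_. gauss1)"

fun hermite :: "nat \<Rightarrow> real \<Rightarrow> real" where
  "hermite 0 x = 1"
| "hermite (Suc 0) x = x"
| "hermite (Suc (Suc k)) x = x * hermite (Suc k) x - real (Suc k) * hermite k x"

definition hnorm :: "nat \<Rightarrow> real \<Rightarrow> real" where
  "hnorm k x = hermite k x / sqrt (fact k)"

definition hermite_multi :: "nat \<Rightarrow> (nat \<Rightarrow> nat) \<Rightarrow> (nat \<Rightarrow> real) \<Rightarrow> real" where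
  "hermite_multi n S x = (\<Prod>i<n. hnorm (S i) (x i))"

definition hermite_coeff :: "nat \<Rightarrow> ((nat \<Rightarrow> real) \<Rightarrow> real) \<Rightarrow> (nat \<Rightarrow> nat) \<Rightarrow> real" where
  "hermite_coeff n f S = (\<integral>x. f x * hermite_multi n S x \<partial>gaussn n)"

definition multi_indices_le :: "nat \<Rightarrow> nat \<Rightarrow> (nat \<Rightarrow> nat) set" where
  "multi_indices_le n d = {S. (\<forall>i\<ge>n. S i = 0) \<and> (\<Sum>i<n. S i) \<le> d}"

definition W_le2 :: "nat \<Rightarrow> ((nat \<Rightarrow> real) \<Rightarrow> real) \<Rightarrow> real" where
  "W_le2 n f = (\<Sum>S\<in>multi_indices_le n 2. (hermite_coeff n f S)\<^sup>2)"

definition cube_ind :: "nat \<Rightarrow> real \<Rightarrow> (nat \<Rightarrow> real) \<Rightarrow> real" where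
  "cube_ind n c x = (if \<forall>i<n. \<bar>x i\<bar> \<le> c then 1 else -1)"

end

theory Submission imports Defs begin

abbreviation phi where "phi \<equiv> std_normal_density"

lemma gauss1_prob: "prob_space gauss1"
  unfolding gauss1_def by (rule prob_space_normal_density) simp

lemma space_gauss1[simp]: "space gauss1 = UNIV" and sets_gauss1[simp]: "sets gauss1 = sets borel"
  unfolding gauss1_def by auto

lemma gauss_integral:
  fixes g :: "real \<Rightarrow> real"
  assumes "g \<in> borel_measurable borel"
  shows "integral\<^sup>L gauss1 g = (\<integral>x. phi x * g x \<partial>lborel)"
  unfolding gauss1_def
  by (subst integral_density) (auto simp: assms normal_density_nonneg)

lemma gauss_integrable:
  fixes g :: "real \<Rightarrow> real"
  assumes "g \<in> borel_measurable borel"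
  shows "integrable gauss1 g \<longleftrightarrow> integrable lborel (\<lambda>x. phi x * g x)"
  unfolding gauss1_def
  by (subst integrable_density) (auto simp: assms normal_density_nonneg)

lemma hnorm0: "hnorm 0 = (\<lambda>x. 1)" by (simp add: hnorm_def fun_eq_iff)
lemma hnorm1: "hnorm 1 = (\<lambda>x. x)" by (simp add: hnorm_def fun_eq_iff)
lemma hnorm2: "hnorm 2 = (\<lambda>x. (x^2 - 1) / sqrt 2)"
  by (simp add: hnorm_def numeral_2_eq_2 power2_eq_square fun_eq_iff)

lemma phi_deriv: "DERIV phi x :> - x * phi x"
  unfolding std_normal_density_def
  by (auto intro!: derivative_eq_intros simp: field_simps power2_eq_square)

lemma xphi_deriv: "DERIV (\<lambda>x. - x * phi x) x :> (x^2 - 1) * phi x"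
  by (auto intro!: derivative_eq_intros phi_deriv simp: field_simps power2_eq_square)

lemma phi_even: "phi (-x) = phi x" by (simp add: std_normal_density_def)

lemma mphi_deriv: "DERIV (\<lambda>x. - phi x) x :> x * phi x"
  using DERIV_minus[OF phi_deriv[of x]] by simp

lemma gauss1_fin: "finite_measure gauss1"
  using gauss1_prob by (rule prob_space.finite_measure)

lemma a1: assumes "0 \<le> c" shows "integral\<^sup>L gauss1 (\<lambda>x. indicator {-c..c} x * hnorm 1 x) = 0"
proof -
  have "integral\<^sup>L gauss1 (\<lambda>x. indicator {-c..c} x * hnorm 1 x) = (\<integral>x. (x * phi x) * indicator {-c..c} x \<partial>lborel)"
    by (unfold hnorm1, subst gauss_integral) (auto simp: mult_ac)
  also have "\<dots> = (- phi c) - (- phi (-c))"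
    using assms
    by (intro integral_FTC_Icc_real mphi_deriv) (auto intro!: continuous_intros simp: std_normal_density_def)
  finally show ?thesis by (simp add: phi_even)
qed

lemma a2: assumes "0 \<le> c" shows "integral\<^sup>L gauss1 (\<lambda>x. indicator {-c..c} x * hnorm 2 x) = - 2 * c * phi c / sqrt 2"
proof -
  have "integral\<^sup>L gauss1 (\<lambda>x. indicator {-c..c} x * hnorm 2 x) = (\<integral>x. ((x^2 - 1) * phi x / sqrt 2) * indicator {-c..c} x \<partial>lborel)"
    by (unfold hnorm2, subst gauss_integral) (auto simp: mult_ac)
  also have "\<dots> = (- c * phi c / sqrt 2) - (- (-c) * phi (-c) / sqrt 2)"
    using assms
    by (intro integral_FTC_Icc_real DERIV_cdivide xphi_deriv) (auto intro!: continuous_intros simp: std_normal_density_def)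
  finally show ?thesis by (simp add: phi_even field_simps)
qed

lemma a0: shows "integral\<^sup>L gauss1 (\<lambda>x. indicator {-c..c} x * hnorm 0 x) = measure gauss1 {x. \<bar>x\<bar> \<le> c}"
proof -
  have "{x. \<bar>x\<bar> \<le> c} = {-c..c}" by auto
  then show ?thesis unfolding hnorm0 by simp
qed

lemma b0: "integral\<^sup>L gauss1 (hnorm 0) = 1"
  using prob_space.prob_space[OF gauss1_prob] unfolding hnorm0 by (simp add: measure_def)

lemma b1: "integral\<^sup>L gauss1 (hnorm 1) = 0"
  using integral_std_normal_moment_odd[of 0]
  by (unfold hnorm1, subst gauss_integral) auto

lemma b2: "integral\<^sup>L gauss1 (hnorm 2) = 0"
proof -
  have "integral\<^sup>L gauss1 (hnorm 2) = (\<integral>x. (phi x * x^(2*1) - phi x) / sqrt 2 \<partial>lborel)"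
    by (unfold hnorm2, subst gauss_integral) (auto simp: field_simps power2_eq_square)
  also have "\<dots> = ((\<integral>x. phi x * x^(2*1) \<partial>lborel) - (\<integral>x. phi x * x^(2*0) \<partial>lborel)) / sqrt 2"
    using integrable_std_normal_moment[of 2] integrable_std_normal_moment[of 0]
    by simp
  also have "\<dots> = 0" by (simp only: integral_std_normal_moment_even) simp
  finally show ?thesis .
qed

lemma hnorm_integrable: "k \<le> 2 \<Longrightarrow> integrable gauss1 (hnorm k)"
proof -
  assume "k \<le> 2"
  then consider "k = 0" | "k = 1" | "k = 2" by linarith
  then show ?thesis
  proof cases
    case 1 then show ?thesis using finite_measure.integrable_const[OF gauss1_fin] by (simp add: hnorm0)
  next
    case 2 then show ?thesis using integrable_std_normal_moment[of 1]
      by (simp only: 2 hnorm1, subst gauss_integrable) auto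
  next
    case 3
    have "integrable lborel (\<lambda>x. (phi x * x^2 - phi x * x^0) / sqrt 2)"
      using integrable_std_normal_moment[of 2] integrable_std_normal_moment[of 0] by auto
    then show ?thesis
      by (simp only: 3 hnorm2, subst gauss_integrable) (auto simp: field_simps)
  qed
qed

interpretation GP: product_prob_space "\<lambda>_::nat. gauss1" I for I
  by (simp add: product_prob_space_def product_prob_space_axioms_def product_sigma_finite_def
      gauss1_prob prob_space_imp_sigma_finite)

lemma cube_ind_prod: "cube_ind n c x = 2 * (\<Prod>i<n. indicator {-c..c} (x i)) - 1"
proof (cases "\<forall>i<n. \<bar>x i\<bar> \<le> c")
  case True
  then have "(\<Prod>i<n. indicator {-c..c} (x i) :: real) = 1"
    by (intro prod.neutral) (auto simp: indicator_def)
  then show ?thesis using True by (simp add: cube_ind_def)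
next
  case False
  then obtain i where "i < n" "\<not> \<bar>x i\<bar> \<le> c" by auto
  then have P0: "(\<Prod>i<n. indicator {-c..c} (x i) :: real) = 0"
    by (intro prod_zero bexI[of _ i]) (auto simp: indicator_def)
  show ?thesis unfolding cube_ind_def P0 using False by simp
qed

lemma int_ind: "k \<le> 2 \<Longrightarrow> integrable gauss1 (\<lambda>x. indicator {-c..c} x * hnorm k x)"
  using integrable_mult_indicator[of "{-c..c}" gauss1 "hnorm k"] hnorm_integrable[of k] by simp

definition Aco :: "real \<Rightarrow> nat \<Rightarrow> real" where
  "Aco c k = integral\<^sup>L gauss1 (\<lambda>x. indicator {-c..c} x * hnorm k x)"
definition Bco :: "nat \<Rightarrow> real" where
  "Bco k = integral\<^sup>L gauss1 (hnorm k)"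

lemma coeff_formula:
  assumes "\<And>i. i < n \<Longrightarrow> S i \<le> 2"
  shows "hermite_coeff n (cube_ind n c) S = 2 * (\<Prod>i<n. Aco c (S i)) - (\<Prod>i<n. Bco (S i))"
proof -
  have eq: "cube_ind n c x * hermite_multi n S x =
     2 * (\<Prod>i<n. (\<lambda>i y. indicator {-c..c} y * hnorm (S i) y) i (x i)) - (\<Prod>i<n. hnorm (S i) (x i))" for x
    by (simp add: cube_ind_prod hermite_multi_def left_diff_distrib prod.distrib)
  have int1: "integrable (gaussn n) (\<lambda>x. \<Prod>i<n. (\<lambda>i y. indicator {-c..c} y * hnorm (S i) y) i (x i))"
    unfolding gaussn_def
    by (rule GP.product_integrable_prod) (auto intro!: int_ind assms)
  have int2: "integrable (gaussn n) (\<lambda>x. \<Prod>i<n. hnorm (S i) (x i))"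
    unfolding gaussn_def
    by (rule GP.product_integrable_prod) (auto intro!: hnorm_integrable assms)
  have "hermite_coeff n (cube_ind n c) S =
     2 * (\<integral>x. (\<Prod>i<n. (\<lambda>i y. indicator {-c..c} y * hnorm (S i) y) i (x i)) \<partial>gaussn n) - (\<integral>x. (\<Prod>i<n. hnorm (S i) (x i)) \<partial>gaussn n)"
    unfolding hermite_coeff_def eq using int1 int2 by simp
  also have "\<dots> = 2 * (\<Prod>i<n. Aco c (S i)) - (\<Prod>i<n. Bco (S i))"
    unfolding gaussn_def Aco_def Bco_def
    by (subst GP.product_integral_prod, simp, rule int_ind, simp add: assms)
       (subst GP.product_integral_prod, auto intro!: hnorm_integrable assms)
  finally show ?thesis .
qed

lemma mi_bound: assumes "S \<in> multi_indices_le n 2" shows "S i \<le> 2"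
proof (cases "i < n")
  case True
  then have "S i \<le> (\<Sum>j<n. S j)" by (intro member_le_sum) auto
  then show ?thesis using assms by (simp add: multi_indices_le_def)
next
  case False then show ?thesis using assms by (simp add: multi_indices_le_def)
qed

lemma mi_finite: "finite (multi_indices_le n 2)"
proof (rule finite_subset)
  show "multi_indices_le n 2 \<subseteq> {f. \<forall>x. (x \<in> {..<n} \<longrightarrow> f x \<in> {..2::nat}) \<and> (x \<notin> {..<n} \<longrightarrow> f x = 0)}"
    using mi_bound by (auto simp: multi_indices_le_def)
  show "finite \<dots>" by (intro finite_set_of_finite_funs) auto
qed

lemma W_eq:
  assumes cpos: "0 \<le> c" and n: "n \<ge> 1"
    and pn: "(Aco c 0) ^ n = 1/2"
  shows "W_le2 n (cube_ind n c) = real n * (2 * Aco c 2 * (Aco c 0)^(n-1))\<^sup>2"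
proof -
  define p where "p = Aco c 0"
  have A1: "Aco c 1 = 0" using a1[OF cpos] by (simp add: Aco_def)
  have B0: "Bco 0 = 1" and B1: "Bco 1 = 0" and B2: "Bco 2 = 0"
    using b0 b1 b2 by (auto simp: Bco_def)
  define e where "e i = (\<lambda>j::nat. if j = i then 2 else 0::nat)" for i :: nat
  define g where "g S = (hermite_coeff n (cube_ind n c) S)\<^sup>2" for S
  define M where "M = multi_indices_le n 2"
  define T where "T = e ` {..<n}"
  have gS: "g S = (2 * (\<Prod>i<n. Aco c (S i)) - (\<Prod>i<n. Bco (S i)))\<^sup>2" if "S \<in> M" for S
    unfolding g_def using that mi_bound[of S n] M_def by (subst coeff_formula) auto
  have TM: "T \<subseteq> M"
  proof
    fix S assume "S \<in> T"
    then obtain i where i: "i < n" "S = e i" by (auto simp: T_def)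
    have "(\<Sum>j<n. S j) = (\<Sum>j<n. if j = i then 2 else 0)" by (simp add: i e_def)
    also have "\<dots> = 2" using i by (simp add: sum.delta)
    finally show "S \<in> M" using i by (auto simp: M_def multi_indices_le_def e_def)
  qed
  have zero: "g S = 0" if S: "S \<in> M - T" for S
  proof (cases "\<forall>i. S i = 0")
    case True
    then have "(\<Prod>i<n. Aco c (S i)) = 1/2" "(\<Prod>i<n. Bco (S i)) = 1" using pn B0 by auto
    then show ?thesis using S by (simp add: gS)
  next
    case False
    then obtain i where i: "S i \<noteq> 0" by auto
    have SM: "S \<in> M" using S by auto
    have "i < n" using i SM unfolding M_def multi_indices_le_def by (metis (mono_tags, lifting) mem_Collect_eq not_less)
    have Bz: "(\<Prod>i<n. Bco (S i)) = 0"
    proof (rule prod_zero)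
      have "S i \<le> 2" using mi_bound SM M_def by auto
      then have "S i = 1 \<or> S i = 2" using i by auto
      then have "Bco (S i) = 0" using B1 B2 by auto
      then show "\<exists>a\<in>{..<n}. Bco (S a) = 0" using \<open>i<n\<close> by blast
    qed simp
    show ?thesis
    proof (cases "\<exists>j<n. S j = 1")
      case True
      then obtain j where "j<n" "S j = 1" by auto
      then have Az: "(\<Prod>i<n. Aco c (S i)) = 0" using A1 by (intro prod_zero bexI[of _ j]) auto
      show ?thesis unfolding gS[OF SM] Az Bz by simp
    next
      case False
      have Si: "S i = 2" using False i mi_bound[of S n i] SM M_def \<open>i<n\<close> by auto
      have "S = e i"
      proof
        fix j show "S j = e i j"
        proof (cases "j = i")
          case True then show ?thesis by (simp add: Si e_def)
        next
          case ne: False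
          show ?thesis
          proof (cases "j < n")
            case True
            have "(\<Sum>k\<in>{i,j}. S k) \<le> (\<Sum>k<n. S k)" using True \<open>i<n\<close> by (intro sum_mono2) auto
            also have "\<dots> \<le> 2" using SM by (simp add: M_def multi_indices_le_def)
            finally show ?thesis using ne Si by (simp add: e_def)
          next
            case False then show ?thesis using SM ne by (simp add: M_def multi_indices_le_def e_def)
          qed
        qed
      qed
      then have "S \<in> T" using \<open>i<n\<close> by (simp add: T_def)
      then show ?thesis using S by simp
    qed
  qed
  have "W_le2 n (cube_ind n c) = sum g M" by (simp add: W_le2_def g_def M_def)
  also have "\<dots> = sum g T"
    using mi_finite TM zero M_def by (intro sum.mono_neutral_right) auto
  also have "\<dots> = sum (g \<circ> e) {..<n}"
    unfolding T_def by (rule sum.reindex) (auto simp: inj_on_def e_def fun_eq_iff)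
  also have "\<dots> = sum (\<lambda>_. (2 * Aco c 2 * p^(n-1))\<^sup>2) {..<n}"
  proof (rule sum.cong)
    fix i assume i: "i \<in> {..<n}"
    have eM: "e i \<in> M" using TM i T_def by auto
    have "(\<Prod>j<n. Aco c (e i j)) = Aco c (e i i) * (\<Prod>j\<in>{..<n}-{i}. Aco c (e i j))"
      using i by (intro prod.remove) auto
    also have "(\<Prod>j\<in>{..<n}-{i}. Aco c (e i j)) = (\<Prod>j\<in>{..<n}-{i}. p)"
      by (intro prod.cong) (auto simp: e_def p_def)
    also have "\<dots> = p^(n-1)" using i by simp
    finally have PA: "(\<Prod>j<n. Aco c (e i j)) = Aco c 2 * p^(n-1)" by (simp add: e_def)
    have PB: "(\<Prod>j<n. Bco (e i j)) = 0" using i B2 by (intro prod_zero bexI[of _ i]) (auto simp: e_def)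
    show "(g \<circ> e) i = (2 * Aco c 2 * p^(n-1))\<^sup>2"
      using gS[OF eM] PA PB by (simp add: mult.assoc)
  qed simp
  also have "\<dots> = real n * (2 * Aco c 2 * (Aco c 0)^(n-1))\<^sup>2" by (simp add: p_def)
  finally show ?thesis .
qed

lemma tail_lower:
  assumes c: "0 < c"
  shows "phi c / (9 * (c + 1)) \<le> 1 - measure gauss1 {x. \<bar>x\<bar> \<le> c}"
proof -
  define d where "d = 1 / (c + 1)"
  have d: "0 < d" "d \<le> 1" "c * d \<le> 1" using c by (auto simp: d_def field_simps)
  have phicd: "phi c / 9 \<le> phi (c + d)"
  proof -
    have e1: "(c+d)^2 = c^2 + 2*(c*d) + d*d" by (simp add: power2_eq_square algebra_simps)
    have "d * d \<le> 1" using d mult_le_one[of d d] by auto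
    then have "(c+d)^2/2 \<le> c^2/2 + 2" using d e1 by linarith
    then have "exp (-(c^2)/2) * exp (-2) \<le> exp (-((c+d)^2)/2)" by (simp add: mult_exp_exp)
    moreover have "exp (2::real) \<le> 9"
    proof -
      have "exp (2::real) = exp 1 * exp 1" by (simp flip: exp_add)
      also have "\<dots> \<le> 3 * 3" using exp_le by (intro mult_mono) auto
      finally show ?thesis by simp
    qed
    then have "1/9 \<le> exp (-2::real)" by (simp add: exp_minus field_simps)
    then have "exp (-(c^2)/2) / 9 \<le> exp (-(c^2)/2) * exp (-2)"
      using mult_left_mono[of "1/9" "exp (-2::real)" "exp (-(c^2)/2)"] by simp
    ultimately have "exp (-(c^2)/2) / 9 \<le> exp (-((c+d)^2)/2)"
      by linarith
    then have "(1/sqrt (2*pi)) * (exp (-(c^2)/2) / 9) \<le> (1/sqrt (2*pi)) * exp (-((c+d)^2)/2)"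
      by (intro mult_left_mono) auto
    moreover have "phi c / 9 = (1/sqrt (2*pi)) * (exp (-(c^2)/2) / 9)"
      unfolding std_normal_density_def by simp
    moreover have "phi (c+d) = (1/sqrt (2*pi)) * exp (-((c+d)^2)/2)"
      unfolding std_normal_density_def by simp
    ultimately show ?thesis by linarith
  qed
  have "d * phi (c + d) = (\<integral>x. phi (c+d) * indicator {c<..c+d} x \<partial>lborel)"
    using d by simp
  also have "\<dots> \<le> (\<integral>x. phi x * indicator {c<..c+d} x \<partial>lborel)"
  proof (rule integral_mono)
    show "integrable lborel (\<lambda>x. phi (c+d) * indicator {c<..c+d} x)" using d by simp
    show "integrable lborel (\<lambda>x. phi x * indicator {c<..c+d} x)"
      using integrable_mult_indicator[of "{c<..c+d}" lborel phi] integrable_std_normal_moment[of 0]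
      by (simp add: mult.commute)
    fix x
    show "phi (c+d) * indicator {c<..c+d} x \<le> phi x * indicator {c<..c+d} x"
    proof (cases "x \<in> {c<..c+d}")
      case True
      then have "x^2 \<le> (c+d)^2" using c by (intro power_mono) auto
      then have "exp (-((c+d)^2)/2) \<le> exp (-(x^2)/2)" by simp
      then have "(1/sqrt (2*pi)) * exp (-((c+d)^2)/2) \<le> (1/sqrt (2*pi)) * exp (-(x^2)/2)"
        by (intro mult_left_mono) auto
      moreover have "phi x = (1/sqrt (2*pi)) * exp (-(x^2)/2)"
        unfolding std_normal_density_def by simp
      moreover have "phi (c+d) = (1/sqrt (2*pi)) * exp (-((c+d)^2)/2)"
        unfolding std_normal_density_def by simp
      ultimately show ?thesis using True by simp
    qed simp
  qed
  also have "\<dots> = measure gauss1 {c<..c+d}"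
    using gauss_integral[of "indicator {c<..c+d}"] by (simp add: mult.commute)
  also have "\<dots> \<le> measure gauss1 (space gauss1 - {x. \<bar>x\<bar> \<le> c})"
    using c by (intro finite_measure.finite_measure_mono[OF gauss1_fin]) auto
  also have "\<dots> = 1 - measure gauss1 {x. \<bar>x\<bar> \<le> c}"
    by (intro prob_space.prob_compl[OF gauss1_prob]) auto
  finally have "d * phi (c + d) \<le> 1 - measure gauss1 {x. \<bar>x\<bar> \<le> c}" .
  moreover have "phi c / (9 * (c + 1)) = d * (phi c / 9)" by (simp add: d_def)
  moreover have "d * (phi c / 9) \<le> d * phi (c + d)"
    using phicd d by (intro mult_left_mono) auto
  ultimately show ?thesis by linarith
qed

lemma cphi_bound:
  assumes n: "n \<ge> 2" and c: "0 < c" and t1: "t \<le> 1 / real n" and t2: "phi c / (9 * (c + 1)) \<le> t"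
  shows "c * phi c \<le> 90 * ln (real n) / real n"
proof -
  define L where "L = ln (real n)"
  have npos: "real n > 0" using n by auto
  have "ln 2 \<le> L" unfolding L_def using n by (subst ln_le_cancel_iff) auto
  then have L: "2/3 \<le> L" using ln2_ge_two_thirds by linarith
  have phipos: "0 < phi c" by (simp add: std_normal_density_def)
  have "phi c \<le> 9 * (c + 1) * t" using t2 c by (simp add: field_simps)
  also have "\<dots> \<le> 9 * (c + 1) * (1 / real n)" using t1 c by (intro mult_left_mono) auto
  finally have phib: "phi c \<le> 9 * (c + 1) / real n" by simp
  show ?thesis
  proof (cases "c^2 \<le> 4 * L")
    case True
    have "c * phi c \<le> c * (9 * (c + 1) / real n)" using phib c by (intro mult_left_mono) auto
    also have "\<dots> = 9 * (c^2 + c) / real n" by (simp add: power2_eq_square field_simps)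
    also have "\<dots> \<le> 9 * (10 * L) / real n"
    proof -
      have "0 \<le> (c - 1)^2" by simp
      then have "c*2 \<le> 1 + c*c" by (simp add: power2_eq_square algebra_simps)
      then have "c \<le> c^2 + 1" using c by (simp add: power2_eq_square)
      then have "c^2 + c \<le> 10 * L" using True L by linarith
      then show ?thesis using npos by (intro divide_right_mono) auto
    qed
    finally show ?thesis by (simp add: L_def)
  next
    case False
    have sq: "1 / sqrt (2 * pi) \<le> (1::real)"
      using pi_gt3 by (simp add: divide_simps real_le_rsqrt)
    have "c * phi c = c * exp (-(c^2)/4) * exp (-(c^2)/4) * (1 / sqrt (2 * pi))"
      proof -
      have "exp (-(c^2)/4) * exp (-(c^2)/4) = exp (-(c^2)/4 + -(c^2)/4)" by (rule mult_exp_exp)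
      also have "-(c^2)/4 + -(c^2)/4 = -(c^2)/(2::real)" by simp
      finally show ?thesis unfolding std_normal_density_def by (simp add: algebra_simps)
    qed
    also have "\<dots> \<le> 1 * (1 / real n) * 1"
    proof (intro mult_mono)
      have "0 \<le> (c/2 - 1)^2" by simp
      then have "c \<le> 1 + c^2/4" by (simp add: power2_eq_square algebra_simps)
      also have "\<dots> \<le> exp (c^2/4)" by (rule exp_ge_add_one_self)
      finally show "c * exp (-(c^2)/4) \<le> 1" by (simp add: exp_minus field_simps)
      have "exp (-(c^2)/4) \<le> exp (- L)" using False by simp
      also have "\<dots> = 1 / real n" unfolding L_def using npos by (simp add: exp_minus inverse_eq_divide)
      finally show "exp (-(c^2)/4) \<le> 1 / real n" .
    qed (use sq c in auto)
    also have "\<dots> \<le> 90 * L / real n" using L npos by (simp add: divide_right_mono)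
    finally show ?thesis by (simp add: L_def)
  qed
qed

theorem fact5p9:
  shows "\<exists>C::real. \<forall>n::nat. \<forall>c::real. n \<ge> 2 \<longrightarrow> c > 0 \<longrightarrow>
           measure gauss1 {x. \<bar>x\<bar> \<le> c} = (1/2) powr (1 / real n) \<longrightarrow>
           W_le2 n (cube_ind n c) \<le> C * (ln (real n))\<^sup>2 / real n"
proof (intro exI allI impI)
  fix n :: nat and c :: real
  assume n: "n \<ge> 2" and c: "c > 0" and pm: "measure gauss1 {x. \<bar>x\<bar> \<le> c} = (1/2) powr (1 / real n)"
  define p where "p = measure gauss1 {x. \<bar>x\<bar> \<le> c}"
  have npos: "real n > 0" using n by auto
  have A0: "Aco c 0 = p" using a0 by (simp add: Aco_def p_def)
  have A2: "Aco c 2 = - 2 * c * phi c / sqrt 2" using a2 c by (simp add: Aco_def)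
  have p0: "0 \<le> p" and p1: "p \<le> 1" unfolding p_def
    using prob_space.prob_le_1[OF gauss1_prob] by auto
  have pn: "p ^ n = 1/2"
  proof -
    have "p ^ n = p powr real n" using pm by (simp add: p_def powr_realpow)
    also have "\<dots> = (1/2) powr (1 / real n * real n)" using pm by (simp add: p_def powr_powr)
    also have "\<dots> = 1/2" using npos by simp
    finally show ?thesis .
  qed
  have t1: "1 - p \<le> 1 / real n"
  proof -
    have "p = exp (1 / real n * ln (1/2))" using pm by (simp add: p_def powr_def)
    also have "\<dots> \<ge> 1 + 1 / real n * ln (1/2)" by (rule exp_ge_add_one_self)
    finally have "1 - ln 2 / real n \<le> p" by (simp add: ln_div)
    moreover have "ln 2 / real n \<le> 1 / real n" using ln_2_less_1 npos by (intro divide_right_mono) auto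
    ultimately show ?thesis by linarith
  qed
  have cb: "c * phi c \<le> 90 * ln (real n) / real n"
    using cphi_bound[OF n c t1] tail_lower[OF c] by (simp add: p_def)
  have cphi0: "0 \<le> c * phi c" using c by (simp add: std_normal_density_def)
  have "W_le2 n (cube_ind n c) = real n * (2 * Aco c 2 * p^(n-1))\<^sup>2"
    using W_eq[of c n] c n pn A0 by simp
  also have "\<dots> = real n * (8 * (c * phi c)^2 * (p^(n-1))^2)"
    by (simp add: A2 power_mult_distrib power_divide)
  also have "\<dots> \<le> real n * (8 * (c * phi c)^2 * 1)"
    using p0 p1 npos by (intro mult_left_mono) (auto intro!: power_le_one)
  also have "\<dots> \<le> real n * (8 * (90 * ln (real n) / real n)^2)"
    using cb cphi0 npos by (intro mult_left_mono power_mono) auto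
  also have "\<dots> = 64800 * (ln (real n))\<^sup>2 / real n"
    using npos by (simp add: power2_eq_square field_simps)
  finally show "W_le2 n (cube_ind n c) \<le> 64800 * (ln (real n))\<^sup>2 / real n" .
qed

end
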